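(* $R_{static}\le R^{go}_\infty\le R^{go}_B\le R^{go}_1\le R^{ub}$ for every $B\in\mathbb N$.
   Context: Let $\mathcal X$ be a finite set, $\Delta_{\mathcal X}$ the set of probability distributions on $\mathcal X$, and $\Delta_K$ the probability simplex on $[K]$. A bandit is $\nu=(\nu_a)_{a\in[K]}\in(\Delta_{\mathcal X})^K$, all arm distributions having full support on $\mathcal X$; $D$ is KL divergence. Let $\xi_1,\dots,\xi_K$ be pairwise disjoint nonempty compact sets of bandits, $\xi=\bigcup_i\xi_i$, $i^*(\nu)=i$ iff $\nu\in\xi_i$. For $B\in\mathbb N$, with sample paths $Q^B=(Q_1,\dots,Q_B)$, $Q_l=(Q_{l,a})_a\in(\Delta_{\mathcal X})^K$, $Q^l=(Q_1,\dots,Q_l)$, allocation rules $r^B=(r_1,\dots,r_B)$ with $r_l:((\Delta_{\mathcal X})^K)^l\to\Delta_K$ arbitrary, and decision rules $J:((\Delta_{\mathcal X})^K)^B\to[K]$ arbitrary, define $$R^{go}_B=\sup_{r^B,J}\inf_{Q^B}\inf_{\nu\in\xi:\,i^*(\nu)\ne J(Q^B)}\frac1B\sum_{l=1}^B\sum_{a}r_l(Q^l)(a)D(Q_{l,a}\|\nu_a),$$ and $R^{go}_\infty=\lim_{B\to\infty}R^{go}_B$ (this limit is known to exist and to equal $\inf_{B}R^{go}_B$). Define $$R_{static}=\sup_{w\in\Delta_K}\ \inf_{a\neq a'}\ \inf_{\nu\in\xi_a,\nu'\in\xi_{a'}}\ \max_{s\in[0,1]}\ -\sum_{b\in[K]}w_b\log\Big(\sum_{x\in\mathcal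 X}\nu'_b(x)^s\nu_b(x)^{1-s}\Big),$$ the Chernoff information $C(p,q)=\max_{s\in[0,1]}-\log\sum_{x}q(x)^sp(x)^{1-s}$, and $$R^{ub}=\inf_{a\neq a'}\ \inf_{\nu\in\xi_a,\nu'\in\xi_{a'}}\ \max_{b\in[K]}C(\nu_b,\nu'_b).$$ *)

theory Defs
  imports "HOL-Analysis.Analysis"
begin

text \<open>Outcome alphabet: a finite type 'x.  Arms: a finite type 'k, so [K] is 'k and K = CARD('k).
  Probability vectors on a finite type.\<close>

definition prob_vec :: "('a::finite \<Rightarrow> real) \<Rightarrow> bool" where
  "prob_vec p \<longleftrightarrow> (\<forall>x. 0 \<le> p x) \<and> sum p UNIV = 1"

definition bandit :: "('k::finite \<Rightarrow> 'x::finite \<Rightarrow> real) \<Rightarrow> bool" where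
  "bandit \<nu> \<longleftrightarrow> (\<forall>a. prob_vec (\<nu> a) \<and> (\<forall>x. 0 < \<nu> a x))"

definition KL :: "('x::finite \<Rightarrow> real) \<Rightarrow> ('x \<Rightarrow> real) \<Rightarrow> real" where
  "KL p q = (\<Sum>x\<in>UNIV. if p x = 0 then 0 else p x * ln (p x / q x))"

definition chernoff :: "('x::finite \<Rightarrow> real) \<Rightarrow> ('x \<Rightarrow> real) \<Rightarrow> ereal" where
  "chernoff p q = (SUP s\<in>{0..1::real}. ereal (- ln (\<Sum>x\<in>UNIV. q x powr s * p x powr (1 - s))))"

text \<open>A sample path Q^B is a list of length B of elements of (Delta_X)^K;
  the allocation rules r_1..r_B are encoded by one function r on lists, r_l(Q^l) = r (take l Q)
  (the length of the argument determines l).  The inner infimum is over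
  bandits nu in xi with i*(nu) \<noteq> J, i.e. over the union of xi i for i \<noteq> J.\<close>

definition go_cost :: "(('k::finite \<Rightarrow> 'x::finite \<Rightarrow> real) list \<Rightarrow> ('k \<Rightarrow> real)) \<Rightarrow> nat
     \<Rightarrow> ('k \<Rightarrow> 'x \<Rightarrow> real) list \<Rightarrow> ('k \<Rightarrow> 'x \<Rightarrow> real) \<Rightarrow> real" where
  "go_cost r B Q \<nu> = (1 / real B) *
     (\<Sum>l<B. \<Sum>a\<in>UNIV. r (take (Suc l) Q) a * KL ((Q ! l) a) (\<nu> a))"

definition R_go :: "('k::finite \<Rightarrow> ('k \<Rightarrow> 'x::finite \<Rightarrow> real) set) \<Rightarrow> nat \<Rightarrow> ereal" where
  "R_go \<xi> B =
     (SUP rJ \<in> {(r, J). \<forall>xs. prob_vec (r xs)}.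
        INF Q \<in> {Q. length Q = B \<and> (\<forall>q\<in>set Q. \<forall>a. prob_vec (q a))}.
          INF \<nu> \<in> (\<Union>i\<in>- {snd rJ Q}. \<xi> i). ereal (go_cost (fst rJ) B Q \<nu>))"

definition R_go_inf :: "('k::finite \<Rightarrow> ('k \<Rightarrow> 'x::finite \<Rightarrow> real) set) \<Rightarrow> ereal" where
  "R_go_inf \<xi> = lim (\<lambda>B. R_go \<xi> B)"

definition R_static :: "('k::finite \<Rightarrow> ('k \<Rightarrow> 'x::finite \<Rightarrow> real) set) \<Rightarrow> ereal" where
  "R_static \<xi> =
     (SUP w \<in> {w. prob_vec w}.
        INF aa' \<in> {(a, a'). a \<noteq> a'}.
          INF \<nu>\<nu>' \<in> \<xi> (fst aa') \<times> \<xi> (snd aa').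
            SUP s\<in>{0..1::real}.
              ereal (- (\<Sum>b\<in>UNIV. w b *
                 ln (\<Sum>x\<in>UNIV. (snd \<nu>\<nu>') b x powr s * (fst \<nu>\<nu>') b x powr (1 - s)))))"

definition R_ub :: "('k::finite \<Rightarrow> ('k \<Rightarrow> 'x::finite \<Rightarrow> real) set) \<Rightarrow> ereal" where
  "R_ub \<xi> =
     (INF aa' \<in> {(a, a'). a \<noteq> a'}.
        INF \<nu>\<nu>' \<in> \<xi> (fst aa') \<times> \<xi> (snd aa').
          Max (range (\<lambda>b. chernoff ((fst \<nu>\<nu>') b) ((snd \<nu>\<nu>') b))))"

end

theory Submission
  imports Defs
begin

lemma gibbs:
  fixes q p p' :: "'x::finite \<Rightarrow> real"
  assumes q: "prob_vec q" and p: "\<And>x. 0 < p x" and p': "\<And>x. 0 < p' x"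
    and s0: "0 \<le> s" and s1: "s \<le> 1"
  shows "- ln (\<Sum>x\<in>UNIV. p' x powr s * p x powr (1-s)) \<le> (1-s) * KL q p + s * KL q p'"
proof -
  define m where "m x = p' x powr s * p x powr (1-s)" for x
  have mpos: "m x > 0" for x using p[of x] p'[of x] by (auto simp: m_def intro!: mult_pos_pos)
  define Z where "Z = (\<Sum>x\<in>UNIV. m x)"
  have Zpos: "Z > 0" unfolding Z_def by (rule sum_pos) (auto simp: mpos)
  have lnm: "ln (m x) = s * ln (p' x) + (1-s) * ln (p x)" for x
    using p[of x] p'[of x] by (simp add: m_def ln_mult ln_powr)
  define t where "t x = (if q x = 0 then 0 else q x * ((1-s) * ln (q x / p x) + s * ln (q x / p' x)))" for x
  have key: "t x \<ge> q x - m x / Z - q x * ln Z" for x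
  proof (cases "q x = 0")
    case True
    then show ?thesis using mpos[of x] Zpos by (simp add: t_def)
  next
    case False
    then have qx: "q x > 0" using q unfolding prob_vec_def by (metis less_eq_real_def)
    have "t x = q x * (ln (q x) - ln (m x))"
      using False qx p[of x] p'[of x] by (simp add: t_def lnm ln_div algebra_simps)
    moreover have "ln (m x / (Z * q x)) \<le> m x / (Z * q x) - 1"
      by (rule ln_le_minus_one) (simp add: mpos Zpos qx)
    moreover have "ln (m x / (Z * q x)) = ln (m x) - ln Z - ln (q x)"
      using mpos[of x] Zpos qx by (simp add: ln_div ln_mult)
    ultimately have "t x \<ge> q x * (1 - m x / (Z * q x) - ln Z)"
      using qx by (smt (verit, best) mult_left_mono)
    also have "q x * (1 - m x / (Z * q x) - ln Z) = q x - m x / Z - q x * ln Z"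
      using qx Zpos by (simp add: field_simps)
    finally show ?thesis .
  qed
  have "- ln Z = (\<Sum>x\<in>UNIV. q x - m x / Z - q x * ln Z)"
    using q Zpos unfolding prob_vec_def
    by (simp add: sum_subtractf sum_divide_distrib[symmetric] Z_def[symmetric] sum_distrib_right[symmetric])
  also have "\<dots> \<le> (\<Sum>x\<in>UNIV. t x)" by (rule sum_mono) (rule key)
  also have "(\<Sum>x\<in>UNIV. t x) = (1-s) * KL q p + s * KL q p'"
    unfolding KL_def t_def by (simp add: sum_distrib_left sum.distrib[symmetric] algebra_simps if_distrib cong: if_cong)
  finally show ?thesis by (simp add: Z_def m_def)
qed

lemma KL_nonneg:
  fixes q p :: "'x::finite \<Rightarrow> real"
  assumes q: "prob_vec q" and p: "prob_vec p" and pp: "\<And>x. 0 < p x"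
  shows "0 \<le> KL q p"
proof -
  have "- ln (\<Sum>x\<in>UNIV. p x powr 0 * p x powr (1-0)) \<le> (1-0) * KL q p + 0 * KL q p"
    by (rule gibbs[OF q pp pp]) auto
  moreover have "(\<Sum>x\<in>UNIV. p x powr 0 * p x powr (1-0)) = 1"
    using p pp unfolding prob_vec_def by (simp add: less_imp_le order.strict_implies_not_eq[OF pp, symmetric])
  ultimately show ?thesis by simp
qed

lemma KL_self:
  fixes p :: "'x::finite \<Rightarrow> real"
  assumes pp: "\<And>x. 0 < p x"
  shows "KL p p = 0"
  unfolding KL_def by (rule sum.neutral) (use pp in \<open>auto simp: order.strict_implies_not_eq[OF pp, symmetric]\<close>)

lemma chernoff_point:
  fixes p p' :: "'x::finite \<Rightarrow> real"
  assumes p: "prob_vec p" and pp: "\<And>x. 0 < p x" and p': "prob_vec p'" and pp': "\<And>x. 0 < p' x"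
  shows "\<exists>q t. prob_vec q \<and> 0 \<le> t \<and> t \<le> 1 \<and>
     KL q p = - ln (\<Sum>x\<in>UNIV. p' x powr t * p x powr (1-t)) \<and>
     KL q p' = - ln (\<Sum>x\<in>UNIV. p' x powr t * p x powr (1-t))"
proof -
  define Z where "Z t = (\<Sum>x\<in>UNIV. p' x powr t * p x powr (1-t))" for t
  define P where "P t x = p' x powr t * p x powr (1-t) / Z t" for t x
  have mpos: "p' x powr t * p x powr (1-t) > 0" for x t
    using pp[of x] pp'[of x] by (auto intro!: mult_pos_pos)
  have Zpos: "Z t > 0" for t unfolding Z_def by (rule sum_pos) (auto simp: mpos)
  have Ppos: "P t x > 0" for t x unfolding P_def using mpos Zpos by simp
  have Pprob: "prob_vec (P t)" for t
    unfolding prob_vec_def P_def using Ppos Zpos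
    by (auto simp: P_def less_imp_le sum_divide_distrib[symmetric] Z_def[symmetric] order.strict_implies_not_eq[OF Zpos, symmetric])
  have KLP: "KL (P t) r = (\<Sum>x\<in>UNIV. P t x * ln (P t x / r x))" for t r
    unfolding KL_def using Ppos by (simp add: order.strict_implies_not_eq[OF Ppos, symmetric])
  define g where "g t = (\<Sum>x\<in>UNIV. P t x * ln (P t x / p x)) - (\<Sum>x\<in>UNIV. P t x * ln (P t x / p' x))" for t
  have P0: "P 0 = p"
  proof -
    have "Z 0 = 1" using p pp unfolding Z_def prob_vec_def
      by (simp add: less_imp_le order.strict_implies_not_eq[OF pp, symmetric] order.strict_implies_not_eq[OF pp', symmetric])
    then show ?thesis using pp pp' by (auto simp: P_def fun_eq_iff less_imp_le order.strict_implies_not_eq[OF pp', symmetric])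
  qed
  have P1: "P 1 = p'"
  proof -
    have "Z 1 = 1" using p' pp' unfolding Z_def prob_vec_def
      by (simp add: less_imp_le order.strict_implies_not_eq[OF pp, symmetric] order.strict_implies_not_eq[OF pp', symmetric])
    then show ?thesis using pp pp' by (auto simp: P_def fun_eq_iff less_imp_le order.strict_implies_not_eq[OF pp, symmetric])
  qed
  have gK: "g t = KL (P t) p - KL (P t) p'" for t unfolding g_def KLP by simp
  have g0: "g 0 \<le> 0"
    using KL_nonneg[OF p p' pp'] KL_self[of p, OF pp] unfolding gK P0 by simp
  have g1: "0 \<le> g 1"
    using KL_nonneg[OF p' p pp] KL_self[of p', OF pp'] unfolding gK P1 by simp
  have cont: "continuous_on {0..1} g"
    unfolding g_def P_def Z_def
    using pp pp' Zpos[unfolded Z_def] mpos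
    by (intro continuous_intros) (auto simp: order.strict_implies_not_eq[symmetric])
  obtain t where t0: "0 \<le> t" and t1: "t \<le> 1" and gt: "g t = 0"
    using IVT'[of g 0 0 1, OF g0 g1 _ cont] by auto
  have ident: "(1-t) * KL (P t) p + t * KL (P t) p' = - ln (Z t)"
  proof -
    have lnP: "ln (P t x) = t * ln (p' x) + (1-t) * ln (p x) - ln (Z t)" for x
      using pp[of x] pp'[of x] mpos[of x t] Zpos[of t]
      by (simp add: P_def ln_div ln_mult ln_powr)
    have pt: "(1-t) * (P t x * ln (P t x / p x)) + t * (P t x * ln (P t x / p' x)) = P t x * (- ln (Z t))" for x
    proof -
      have ha: "ln (P t x / p x) = t * (ln (p' x) - ln (p x)) - ln (Z t)"
        and hb: "ln (P t x / p' x) = (1-t) * (ln (p x) - ln (p' x)) - ln (Z t)"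
        using pp[of x] pp'[of x] Ppos[of t x] by (simp_all add: ln_div lnP algebra_simps)
      have "(1-t) * (P t x * ln (P t x / p x)) + t * (P t x * ln (P t x / p' x))
          = P t x * ((1-t) * ln (P t x / p x) + t * ln (P t x / p' x))" by algebra
      also have "(1-t) * ln (P t x / p x) + t * ln (P t x / p' x) = - ln (Z t)"
        unfolding ha hb by algebra
      finally show ?thesis .
    qed
    have "(1-t) * KL (P t) p + t * KL (P t) p' = (\<Sum>x\<in>UNIV. P t x * (- ln (Z t)))"
      unfolding KLP sum_distrib_left sum.distrib[symmetric] using pt by simp
    also have "\<dots> = - ln (Z t)"
      using Pprob[of t] unfolding prob_vec_def by (simp add: sum_negf sum_distrib_right[symmetric])
    finally show ?thesis .
  qed
  have "KL (P t) p = KL (P t) p'" using gt unfolding g_def KLP by simp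
  then have "KL (P t) p = - ln (Z t)" "KL (P t) p' = - ln (Z t)" using ident by (auto simp: algebra_simps)
  then show ?thesis using Pprob t0 t1 unfolding Z_def by blast
qed

lemma go_cost_1: "go_cost r 1 [q] \<mu> = (\<Sum>a\<in>UNIV. r [q] a * KL (q a) (\<mu> a))"
  unfolding go_cost_def by simp

lemma sum_prob_le_Max:
  fixes w d :: "'k::finite \<Rightarrow> real"
  assumes "prob_vec w"
  shows "(\<Sum>b\<in>UNIV. w b * d b) \<le> Max (range d)"
proof -
  have "(\<Sum>b\<in>UNIV. w b * d b) \<le> (\<Sum>b\<in>UNIV. w b * Max (range d))"
    by (rule sum_mono) (use assms in \<open>auto simp: prob_vec_def intro!: mult_left_mono\<close>)
  also have "\<dots> = Max (range d)" using assms by (simp add: prob_vec_def sum_distrib_right[symmetric])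
  finally show ?thesis .
qed

lemma ub_core:
  fixes \<xi> :: "'k::finite \<Rightarrow> ('k \<Rightarrow> 'x::finite \<Rightarrow> real) set"
    and r :: "('k \<Rightarrow> 'x \<Rightarrow> real) list \<Rightarrow> 'k \<Rightarrow> real" and J :: "('k \<Rightarrow> 'x \<Rightarrow> real) list \<Rightarrow> 'k"
  assumes bandits: "\<And>i \<nu>. \<nu> \<in> \<xi> i \<Longrightarrow> bandit \<nu>"
    and r: "\<forall>xs. prob_vec (r xs)" and aa': "a \<noteq> a'" and \<nu>: "\<nu> \<in> \<xi> a" and \<nu>': "\<nu>' \<in> \<xi> a'"
  shows "(INF Q\<in>{Q. length Q = 1 \<and> (\<forall>q\<in>set Q. \<forall>a. prob_vec (q a))}.
    INF \<nu>\<in>(\<Union>i\<in>- {J Q}. \<xi> i). ereal (go_cost r 1 Q \<nu>))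
  \<le> (MAX b. chernoff (\<nu> b) (\<nu>' b))"
proof -
have bn: "bandit \<nu>" "bandit \<nu>'" using bandits \<nu> \<nu>' by auto
define d where "d tt b = - ln (\<Sum>x\<in>UNIV. \<nu>' b x powr tt * \<nu> b x powr (1-tt))" for tt b
have "\<forall>b. \<exists>q tt. prob_vec q \<and> 0 \<le> tt \<and> tt \<le> 1 \<and> KL q (\<nu> b) = d tt b \<and> KL q (\<nu>' b) = d tt b"
  using chernoff_point bn unfolding bandit_def d_def by blast
then obtain qf tf where qf: "\<And>b. prob_vec (qf b)" and tf0: "\<And>b. 0 \<le> tf b" and tf1: "\<And>b. tf b \<le> 1"
  and KLa: "\<And>b. KL (qf b) (\<nu> b) = d (tf b) b" and KLb: "\<And>b. KL (qf b) (\<nu>' b) = d (tf b) b"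
  by metis
define D where "D b = d (tf b) b" for b
have Qin: "[qf] \<in> {Q. length Q = 1 \<and> (\<forall>q\<in>set Q. \<forall>a. prob_vec (q a))}" using qf by simp
have costle: "ereal (go_cost r 1 [qf] \<mu>) \<le> ereal (Max (range D))"
  if "\<mu> = \<nu> \<or> \<mu> = \<nu>'" for \<mu>
proof -
  have "go_cost r 1 [qf] \<mu> = (\<Sum>b\<in>UNIV. r [qf] b * D b)"
    unfolding go_cost_1 D_def using that KLa KLb by auto
  also have "\<dots> \<le> Max (range D)" using r by (intro sum_prob_le_Max) auto
  finally show ?thesis by simp
qed
have Dle: "ereal (Max (range D)) \<le> (MAX b. chernoff (\<nu> b) (\<nu>' b))"
proof -
  have "Max (range D) \<in> range D" by (rule Max_in) auto
  then obtain b0 where "Max (range D) = D b0" by blast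
  moreover have "ereal (D b0) \<le> chernoff (\<nu> b0) (\<nu>' b0)"
    unfolding chernoff_def D_def d_def using tf0[of b0] tf1[of b0]
    by (intro SUP_upper2[of "tf b0"]) auto
  moreover have "chernoff (\<nu> b0) (\<nu>' b0) \<le> (MAX b. chernoff (\<nu> b) (\<nu>' b))"
    by (rule Max_ge) auto
  ultimately show ?thesis by (metis order.trans)
qed
have "(INF Q\<in>{Q. length Q = 1 \<and> (\<forall>q\<in>set Q. \<forall>a. prob_vec (q a))}.
    INF \<nu>\<in>(\<Union>i\<in>- {J Q}. \<xi> i). ereal (go_cost r 1 Q \<nu>))
    \<le> (INF \<mu>\<in>(\<Union>i\<in>- {J [qf]}. \<xi> i). ereal (go_cost r 1 [qf] \<mu>))"
  by (rule INF_lower[OF Qin])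
also have "\<dots> \<le> ereal (Max (range D))"
proof (cases "J [qf] = a")
  case True
  then have "\<nu>' \<in> (\<Union>i\<in>- {J [qf]}. \<xi> i)" using \<nu>' aa' by auto
  then show ?thesis by (rule INF_lower2) (rule costle, simp)
next
  case False
  then have "\<nu> \<in> (\<Union>i\<in>- {J [qf]}. \<xi> i)" using \<nu> by auto
  then show ?thesis by (rule INF_lower2) (rule costle, simp)
qed
also note Dle
finally show ?thesis .
qed

lemma go1_le_ub:
  fixes \<xi> :: "'k::finite \<Rightarrow> ('k \<Rightarrow> 'x::finite \<Rightarrow> real) set"
  assumes bandits: "\<And>i \<nu>. \<nu> \<in> \<xi> i \<Longrightarrow> bandit \<nu>"
  shows "R_go \<xi> 1 \<le> R_ub \<xi>"
  unfolding R_go_def R_ub_def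
  by (intro SUP_least INF_greatest) (clarsimp simp del: One_nat_def, rule ub_core[OF bandits], auto)

lemma static_bound:
  fixes w :: "'k::finite \<Rightarrow> real" and \<nu>h \<nu> :: "'k \<Rightarrow> 'x::finite \<Rightarrow> real"
  assumes w: "prob_vec w" and B: "B \<ge> 1"
    and Q: "length Q = B" "\<forall>q\<in>set Q. \<forall>a. prob_vec (q a)"
    and bh: "bandit \<nu>h" and bn: "bandit \<nu>" and s0: "0 \<le> s" and s1: "s \<le> 1"
  shows "- (\<Sum>b\<in>UNIV. w b * ln (\<Sum>x\<in>UNIV. \<nu> b x powr s * \<nu>h b x powr (1-s)))
     \<le> (1-s) * go_cost (\<lambda>_. w) B Q \<nu>h + s * go_cost (\<lambda>_. w) B Q \<nu>"
proof -
  define V where "V = - (\<Sum>b\<in>UNIV. w b * ln (\<Sum>x\<in>UNIV. \<nu> b x powr s * \<nu>h b x powr (1-s)))"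
  define A where "A l = (\<Sum>b\<in>UNIV. w b * KL ((Q ! l) b) (\<nu>h b))" for l
  define C where "C l = (\<Sum>b\<in>UNIV. w b * KL ((Q ! l) b) (\<nu> b))" for l
  have per: "V \<le> (1-s) * A l + s * C l" if l: "l < B" for l
  proof -
    have qp: "prob_vec ((Q ! l) b)" for b using Q l by auto
    have g: "- ln (\<Sum>x\<in>UNIV. \<nu> b x powr s * \<nu>h b x powr (1-s))
        \<le> (1-s) * KL ((Q ! l) b) (\<nu>h b) + s * KL ((Q ! l) b) (\<nu> b)" for b
      by (rule gibbs[OF qp]) (use bh bn s0 s1 in \<open>auto simp: bandit_def\<close>)
    have "V = (\<Sum>b\<in>UNIV. w b * (- ln (\<Sum>x\<in>UNIV. \<nu> b x powr s * \<nu>h b x powr (1-s))))"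
      unfolding V_def by (simp add: sum_negf)
    also have "\<dots> \<le> (\<Sum>b\<in>UNIV. w b * ((1-s) * KL ((Q ! l) b) (\<nu>h b) + s * KL ((Q ! l) b) (\<nu> b)))"
      by (rule sum_mono, rule mult_left_mono[OF g]) (use w in \<open>auto simp: prob_vec_def\<close>)
    also have "\<dots> = (1-s) * A l + s * C l"
      unfolding A_def C_def sum_distrib_left sum.distrib[symmetric] by (rule sum.cong) (simp_all add: algebra_simps)
    finally show ?thesis .
  qed
  have "real B * V = (\<Sum>l<B. V)" by simp
  also have "\<dots> \<le> (\<Sum>l<B. (1-s) * A l + s * C l)" by (rule sum_mono) (use per in auto)
  also have "\<dots> = (1-s) * (\<Sum>l<B. A l) + s * (\<Sum>l<B. C l)"
    by (simp add: sum.distrib sum_distrib_left)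
  finally have "real B * V \<le> (1-s) * (\<Sum>l<B. A l) + s * (\<Sum>l<B. C l)" .
  moreover have "(\<Sum>l<B. A l) = real B * go_cost (\<lambda>_. w) B Q \<nu>h"
    "(\<Sum>l<B. C l) = real B * go_cost (\<lambda>_. w) B Q \<nu>"
    unfolding go_cost_def A_def C_def using B by simp_all
  ultimately have "real B * V \<le> real B * ((1-s) * go_cost (\<lambda>_. w) B Q \<nu>h + s * go_cost (\<lambda>_. w) B Q \<nu>)"
    by (simp add: algebra_simps)
  then show ?thesis unfolding V_def[symmetric]
    by (rule mult_left_le_imp_le) (use B in simp)
qed

lemma static_core:
  fixes \<xi> :: "'k::finite \<Rightarrow> ('k \<Rightarrow> 'x::finite \<Rightarrow> real) set" and w :: "'k \<Rightarrow> real"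
  assumes bandits: "\<And>i \<nu>. \<nu> \<in> \<xi> i \<Longrightarrow> bandit \<nu>" and B: "B \<ge> 1" and w: "prob_vec w"
  shows "(INF aa'\<in>{(a, a'). a \<noteq> a'}.
          INF \<nu>\<nu>' \<in> \<xi> (fst aa') \<times> \<xi> (snd aa').
            SUP s\<in>{0..1::real}.
              ereal (- (\<Sum>b\<in>UNIV. w b *
                 ln (\<Sum>x\<in>UNIV. (snd \<nu>\<nu>') b x powr s * (fst \<nu>\<nu>') b x powr (1 - s)))))
         \<le> R_go \<xi> B" (is "?St \<le> _")
proof -
  define cost where "cost Q \<nu> = go_cost (\<lambda>_. w) B Q \<nu>" for Q and \<nu> :: "'k \<Rightarrow> 'x \<Rightarrow> real"
  define f where "f Q i = (INF \<nu>\<in>\<xi> i. ereal (cost Q \<nu>))" for Q i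
  define J where "J Q = (SOME i. \<forall>i'. f Q i \<le> f Q i')" for Q
  have Jmin: "f Q (J Q) \<le> f Q i'" for Q i'
  proof -
    have "Min (range (f Q)) \<in> range (f Q)" by (rule Min_in) auto
    then obtain i0 where i0: "Min (range (f Q)) = f Q i0" by blast
    have "\<forall>i'. f Q i0 \<le> f Q i'" unfolding i0[symmetric] by (auto intro: Min_le)
    then have "\<exists>i. \<forall>i'. f Q i \<le> f Q i'" by blast
    then have "\<forall>i'. f Q (J Q) \<le> f Q i'" unfolding J_def by (rule someI_ex)
    then show ?thesis by blast
  qed
  have main: "?St \<le> ereal (cost Q \<nu>)"
    if Q: "length Q = B" "\<forall>q\<in>set Q. \<forall>a. prob_vec (q a)" and i: "i \<noteq> J Q" and \<nu>: "\<nu> \<in> \<xi> i" for Q \<nu> i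
  proof (rule ereal_le_epsilon2)
    fix e :: real assume e: "0 < e"
    have "f Q (J Q) \<le> f Q i" by (rule Jmin)
    also have "\<dots> \<le> ereal (cost Q \<nu>)" unfolding f_def by (rule INF_lower[OF \<nu>])
    also have "\<dots> < ereal (cost Q \<nu> + e)" using e by simp
    finally obtain \<nu>h where \<nu>h: "\<nu>h \<in> \<xi> (J Q)" and lt: "cost Q \<nu>h < cost Q \<nu> + e"
      unfolding f_def INF_less_iff by auto
    have "?St \<le> (SUP s\<in>{0..1::real}.
              ereal (- (\<Sum>b\<in>UNIV. w b * ln (\<Sum>x\<in>UNIV. \<nu> b x powr s * \<nu>h b x powr (1 - s)))))"
      apply (rule INF_lower2[of "(J Q, i)"])
      using i apply simp
      apply (rule INF_lower2[of "(\<nu>h, \<nu>)"])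
      using \<nu>h \<nu> by auto
    also have "\<dots> \<le> ereal (cost Q \<nu> + e)"
    proof (rule SUP_least)
      fix s :: real assume s: "s \<in> {0..1}"
      have "- (\<Sum>b\<in>UNIV. w b * ln (\<Sum>x\<in>UNIV. \<nu> b x powr s * \<nu>h b x powr (1 - s)))
          \<le> (1-s) * cost Q \<nu>h + s * cost Q \<nu>"
        unfolding cost_def
        by (rule static_bound[OF w B Q]) (use s bandits \<nu> \<nu>h in auto)
      also have "\<dots> \<le> (1-s) * (cost Q \<nu> + e) + s * (cost Q \<nu> + e)"
        using s lt e by (intro add_mono mult_left_mono) auto
      also have "\<dots> = cost Q \<nu> + e" by algebra
      finally show "ereal (- (\<Sum>b\<in>UNIV. w b * ln (\<Sum>x\<in>UNIV. \<nu> b x powr s * \<nu>h b x powr (1 - s))))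
          \<le> ereal (cost Q \<nu> + e)" by simp
    qed
    finally show "?St \<le> ereal (cost Q \<nu>) + ereal e" by simp
  qed
  have "?St \<le> (INF Q\<in>{Q. length Q = B \<and> (\<forall>q\<in>set Q. \<forall>a. prob_vec (q a))}.
          INF \<nu>\<in>(\<Union>i\<in>- {J Q}. \<xi> i). ereal (go_cost (\<lambda>_. w) B Q \<nu>))"
  proof (intro INF_greatest)
    fix Q \<nu> assume Q: "Q \<in> {Q. length Q = B \<and> (\<forall>q\<in>set Q. \<forall>a. prob_vec (q a))}"
      and \<nu>: "\<nu> \<in> (\<Union>i\<in>- {J Q}. \<xi> i)"
    from \<nu> obtain i where "i \<noteq> J Q" "\<nu> \<in> \<xi> i" by auto
    then show "?St \<le> ereal (go_cost (\<lambda>_. w) B Q \<nu>)"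
      using main[of Q i \<nu>] Q unfolding cost_def by blast
  qed
  also have "\<dots> \<le> R_go \<xi> B"
    unfolding R_go_def
    by (rule SUP_upper2[of "(\<lambda>_. w, J)"]) (use w in auto)
  finally show ?thesis .
qed

lemma static_le_go:
  fixes \<xi> :: "'k::finite \<Rightarrow> ('k \<Rightarrow> 'x::finite \<Rightarrow> real) set"
  assumes bandits: "\<And>i \<nu>. \<nu> \<in> \<xi> i \<Longrightarrow> bandit \<nu>" and B: "B \<ge> 1"
  shows "R_static \<xi> \<le> R_go \<xi> B"
  unfolding R_static_def
  by (rule SUP_least) (rule static_core[OF bandits B], auto)

lemma ereal_mult_INF:
  fixes f :: "'a \<Rightarrow> ereal"
  assumes c: "c > (0::real)"
  shows "ereal c * (INF x\<in>A. f x) = (INF x\<in>A. ereal c * f x)"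
proof -
  have "bij ((*) (ereal c))"
    apply (rule bij_betw_byWitness[of _ "\<lambda>x. (x::ereal) / c"], auto simp: c ereal_mult_divide)
    using c ereal_divide_eq by auto
  then have "ereal c * Inf (f ` A) = Inf ((*) (ereal c) ` (f ` A))"
    by (simp add: c ereal_mult_left_mono less_imp_le mono_def mono_bij_Inf)
  then show ?thesis by (simp add: image_comp comp_def)
qed

lemma blk_r'_prob:
  fixes r :: "('k::finite \<Rightarrow> 'x::finite \<Rightarrow> real) list \<Rightarrow> 'k \<Rightarrow> real"
    and blk :: "nat \<Rightarrow> nat"
  assumes r: "\<And>xs. prob_vec (r xs)"
    and r'_def: "\<And>xs. r' xs = (if xs = [] then r [] else
        if card {l\<in>{..<B}. blk l = length xs - 1} = 0 then r [] else
        (\<lambda>a. (\<Sum>l\<in>{l\<in>{..<B}. blk l = length xs - 1}. r (map (\<lambda>l'. xs ! blk l') [0..<Suc l]) a)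
               / real (card {l\<in>{..<B}. blk l = length xs - 1})))"
  shows "prob_vec (r' xs)"
proof (cases "xs = [] \<or> card {l\<in>{..<B}. blk l = length xs - 1} = 0")
  case True
  then show ?thesis using r r'_def[of xs] by auto
next
  case False
  define SS where "SS = {l\<in>{..<B}. blk l = length xs - 1}"
  have ne: "xs \<noteq> []" and cne: "card SS \<noteq> 0" using False unfolding SS_def by blast+
  then have cpos: "card SS > 0" by simp
  have eq: "r' xs = (\<lambda>a. (\<Sum>l\<in>SS. r (map (\<lambda>l'. xs ! blk l') [0..<Suc l]) a) / real (card SS))"
    using r'_def[of xs] ne cne unfolding SS_def by (simp only: if_False)
  have "(\<Sum>a\<in>UNIV. r' xs a) = (\<Sum>l\<in>SS. \<Sum>a\<in>UNIV. r (map (\<lambda>l'. xs ! blk l') [0..<Suc l]) a) / real (card SS)"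
    unfolding eq by (simp add: sum_divide_distrib[symmetric] del: upt_Suc) (rule disjI2, rule sum.swap)
  also have "\<dots> = 1" using r cpos unfolding prob_vec_def by simp
  finally show ?thesis unfolding prob_vec_def using r unfolding eq prob_vec_def
    by (auto intro!: divide_nonneg_nonneg sum_nonneg)
qed

lemma block_cost:
  fixes r :: "('k::finite \<Rightarrow> 'x::finite \<Rightarrow> real) list \<Rightarrow> 'k \<Rightarrow> real"
    and blk :: "nat \<Rightarrow> nat" and Q :: "('k \<Rightarrow> 'x \<Rightarrow> real) list" and \<nu> :: "'k \<Rightarrow> 'x \<Rightarrow> real"
  assumes B: "B \<ge> 1" and B0: "B0 \<ge> 1"
    and mono: "\<And>l l'. l' \<le> l \<Longrightarrow> blk l' \<le> blk l"
    and rng: "\<And>l. l < B \<Longrightarrow> blk l < B0"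
    and cnt: "\<And>j. j < B0 \<Longrightarrow> real (card {l\<in>{..<B}. blk l = j}) * real B0 \<le> c * real B"
    and r: "\<And>xs. prob_vec (r xs)"
    and Q: "length Q = B0" "\<forall>q\<in>set Q. \<forall>a. prob_vec (q a)"
    and \<nu>: "bandit \<nu>"
    and r'_def: "\<And>xs. r' xs = (if xs = [] then r [] else
        if card {l\<in>{..<B}. blk l = length xs - 1} = 0 then r [] else
        (\<lambda>a. (\<Sum>l\<in>{l\<in>{..<B}. blk l = length xs - 1}. r (map (\<lambda>l'. xs ! blk l') [0..<Suc l]) a)
               / real (card {l\<in>{..<B}. blk l = length xs - 1})))"
  shows "go_cost r B (map (\<lambda>l. Q ! blk l) [0..<B]) \<nu> \<le> c * go_cost r' B0 Q \<nu>"
proof -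
  define S where "S j = {l\<in>{..<B}. blk l = j}" for j
  define N where "N j = card (S j)" for j
  define R where "R l = map (\<lambda>l'. Q ! blk l') [0..<Suc l]" for l
  define T where "T l = (\<Sum>a\<in>UNIV. r (R l) a * KL ((Q ! blk l) a) (\<nu> a))" for l
  define cj where "cj j = (\<Sum>a\<in>UNIV. r' (take (Suc j) Q) a * KL ((Q ! j) a) (\<nu> a))" for j
  have finS: "finite (S j)" for j unfolding S_def by auto
  have lhs: "go_cost r B (map (\<lambda>l. Q ! blk l) [0..<B]) \<nu> = (1 / real B) * (\<Sum>l<B. T l)"
    unfolding go_cost_def T_def R_def
    by (intro arg_cong2[where f="(*)"] refl sum.cong) (simp_all add: take_map take_upt)
  have grp: "(\<Sum>l<B. T l) = (\<Sum>j<B0. \<Sum>l\<in>S j. T l)"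
    unfolding S_def by (rule sum.group[symmetric]) (use rng in auto)
  have rsum: "(\<Sum>l\<in>S j. r (R l) a) = real (N j) * r' (take (Suc j) Q) a" if j: "j < B0" for j a
  proof (cases "N j = 0")
    case True
    then have "S j = {}" using finS unfolding N_def by auto
    then show ?thesis using True by simp
  next
    case False
    have ne: "take (Suc j) Q \<noteq> []" using j Q by auto
    have len: "length (take (Suc j) Q) - 1 = j" using j Q by auto
    have mp: "map (\<lambda>l'. take (Suc j) Q ! blk l') [0..<Suc l] = R l" if "l \<in> S j" for l
    proof -
      have "blk l' < Suc j" if "l' < Suc l" for l' using mono[of l' l] that \<open>l \<in> S j\<close> unfolding S_def by auto
      then show ?thesis unfolding R_def by (auto simp: nth_take)
    qed
    have "r' (take (Suc j) Q) a = (\<Sum>l\<in>S j. r (map (\<lambda>l'. take (Suc j) Q ! blk l') [0..<Suc l]) a) / real (N j)"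
      using r'_def[of "take (Suc j) Q"] unfolding len
      using ne False unfolding N_def S_def
      by (simp only: if_False)
    also have "\<dots> = (\<Sum>l\<in>S j. r (R l) a) / real (N j)"
      using mp by (simp del: upt_Suc)
    finally have "r' (take (Suc j) Q) a = (\<Sum>l\<in>S j. r (R l) a) / real (N j)" .
    then show ?thesis using False by simp
  qed
  have blockT: "(\<Sum>l\<in>S j. T l) = real (N j) * cj j" if j: "j < B0" for j
  proof -
    have "(\<Sum>l\<in>S j. T l) = (\<Sum>l\<in>S j. \<Sum>a\<in>UNIV. r (R l) a * KL ((Q ! j) a) (\<nu> a))"
      unfolding T_def S_def by (rule sum.cong) auto
    also have "\<dots> = (\<Sum>a\<in>UNIV. (\<Sum>l\<in>S j. r (R l) a) * KL ((Q ! j) a) (\<nu> a))"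
      by (subst sum.swap) (simp add: sum_distrib_right)
    also have "\<dots> = real (N j) * cj j"
      unfolding cj_def using rsum[OF j] by (simp add: sum_distrib_left mult.assoc)
    finally show ?thesis .
  qed
  have r'p: "prob_vec (r' xs)" for xs by (rule blk_r'_prob[OF r r'_def])
  have cj_nonneg: "cj j \<ge> 0" if j: "j < B0" for j
  proof -
    have qa: "prob_vec ((Q ! j) a)" for a using Q j by auto
    show ?thesis unfolding cj_def
      using r'p \<nu> qa by (auto intro!: sum_nonneg mult_nonneg_nonneg KL_nonneg simp: prob_vec_def bandit_def)
  qed
  have rhs: "go_cost r' B0 Q \<nu> = (1 / real B0) * (\<Sum>j<B0. cj j)"
    unfolding go_cost_def cj_def by simp
  have "go_cost r B (map (\<lambda>l. Q ! blk l) [0..<B]) \<nu> = (\<Sum>j<B0. (real (N j) / real B) * cj j)"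
    unfolding lhs grp using blockT by (simp add: sum_distrib_left)
  also have "\<dots> \<le> (\<Sum>j<B0. (c / real B0) * cj j)"
  proof (rule sum_mono)
    fix j assume "j \<in> {..<B0}"
    then have j: "j < B0" by simp
    have "real (N j) / real B \<le> c / real B0"
      using cnt[OF j] B B0 unfolding N_def S_def by (simp add: field_simps)
    then show "(real (N j) / real B) * cj j \<le> (c / real B0) * cj j"
      using cj_nonneg[OF j] by (rule mult_right_mono)
  qed
  also have "\<dots> = c * go_cost r' B0 Q \<nu>" unfolding rhs by (simp add: sum_distrib_left)
  finally show ?thesis .
qed

lemma block_R:
  fixes \<xi> :: "'k::finite \<Rightarrow> ('k \<Rightarrow> 'x::finite \<Rightarrow> real) set" and blk :: "nat \<Rightarrow> nat"
  assumes bandits: "\<And>i \<nu>. \<nu> \<in> \<xi> i \<Longrightarrow> bandit \<nu>"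
    and B: "B \<ge> 1" and B0: "B0 \<ge> 1"
    and mono: "\<And>l l'. l' \<le> l \<Longrightarrow> blk l' \<le> blk l"
    and rng: "\<And>l. l < B \<Longrightarrow> blk l < B0"
    and cnt: "\<And>j. j < B0 \<Longrightarrow> real (card {l\<in>{..<B}. blk l = j}) * real B0 \<le> c * real B"
    and c: "c > 0"
  shows "R_go \<xi> B \<le> ereal c * R_go \<xi> B0"
  unfolding R_go_def
proof (rule SUP_least)
  fix rJ assume "rJ \<in> {(r :: ('k \<Rightarrow> 'x \<Rightarrow> real) list \<Rightarrow> 'k \<Rightarrow> real, J :: ('k \<Rightarrow> 'x \<Rightarrow> real) list \<Rightarrow> 'k). \<forall>xs. prob_vec (r xs)}"
  then obtain r J where rJ: "rJ = (r, J)" and r: "\<And>xs. prob_vec (r xs)" by auto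
  define r' where "r' xs = (if xs = [] then r [] else
        if card {l\<in>{..<B}. blk l = length xs - 1} = 0 then r [] else
        (\<lambda>a. (\<Sum>l\<in>{l\<in>{..<B}. blk l = length xs - 1}. r (map (\<lambda>l'. xs ! blk l') [0..<Suc l]) a)
               / real (card {l\<in>{..<B}. blk l = length xs - 1})))" for xs
  define E where "E Q = map (\<lambda>l. Q ! blk l) [0..<B]" for Q :: "('k \<Rightarrow> 'x \<Rightarrow> real) list"
  define J' where "J' Q = J (E Q)" for Q
  have r'p: "prob_vec (r' xs)" for xs by (rule blk_r'_prob[OF r r'_def])
  have "(INF Q\<in>{Q. length Q = B \<and> (\<forall>q\<in>set Q. \<forall>a. prob_vec (q a))}.
          INF \<nu>\<in>(\<Union>i\<in>- {J Q}. \<xi> i). ereal (go_cost r B Q \<nu>))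
      \<le> (INF Q\<in>{Q. length Q = B0 \<and> (\<forall>q\<in>set Q. \<forall>a. prob_vec (q a))}.
          INF \<nu>\<in>(\<Union>i\<in>- {J' Q}. \<xi> i). ereal c * ereal (go_cost r' B0 Q \<nu>))"
  proof (intro INF_greatest)
    fix Q0 \<nu> assume Q0: "Q0 \<in> {Q. length Q = B0 \<and> (\<forall>q\<in>set Q. \<forall>a. prob_vec (q a))}"
      and \<nu>: "\<nu> \<in> (\<Union>i\<in>- {J' Q0}. \<xi> i)"
    have EQ: "E Q0 \<in> {Q. length Q = B \<and> (\<forall>q\<in>set Q. \<forall>a. prob_vec (q a))}"
      using Q0 rng unfolding E_def by (auto simp: in_set_conv_nth) (metis nth_mem)
    have \<nu>': "\<nu> \<in> (\<Union>i\<in>- {J (E Q0)}. \<xi> i)" using \<nu> unfolding J'_def .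
    have bn: "bandit \<nu>" using \<nu> bandits by auto
    have "go_cost r B (E Q0) \<nu> \<le> c * go_cost r' B0 Q0 \<nu>"
      unfolding E_def
      by (rule block_cost[OF B B0 mono rng cnt r _ _ bn r'_def]) (use Q0 in auto)
    then have "ereal (go_cost r B (E Q0) \<nu>) \<le> ereal c * ereal (go_cost r' B0 Q0 \<nu>)" by simp
    then show "(INF Q\<in>{Q. length Q = B \<and> (\<forall>q\<in>set Q. \<forall>a. prob_vec (q a))}.
          INF \<nu>\<in>(\<Union>i\<in>- {J Q}. \<xi> i). ereal (go_cost r B Q \<nu>))
      \<le> ereal c * ereal (go_cost r' B0 Q0 \<nu>)"
      by (intro INF_lower2[OF EQ] INF_lower2[OF \<nu>'])
  qed
  also have "\<dots> = ereal c * (INF Q\<in>{Q. length Q = B0 \<and> (\<forall>q\<in>set Q. \<forall>a. prob_vec (q a))}.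
          INF \<nu>\<in>(\<Union>i\<in>- {J' Q}. \<xi> i). ereal (go_cost r' B0 Q \<nu>))"
    by (simp add: ereal_mult_INF[OF c])
  also have "\<dots> \<le> ereal c * (SUP rJ\<in>{(r, J). \<forall>xs. prob_vec (r xs)}.
        INF Q\<in>{Q. length Q = B0 \<and> (\<forall>q\<in>set Q. \<forall>a. prob_vec (q a))}.
          INF \<nu>\<in>(\<Union>i\<in>- {snd rJ Q}. \<xi> i). ereal (go_cost (fst rJ) B0 Q \<nu>))"
    by (rule ereal_mult_left_mono, rule SUP_upper2[of "(r', J')"]) (use r'p c in auto)
  finally show "(INF Q\<in>{Q. length Q = B \<and> (\<forall>q\<in>set Q. \<forall>a. prob_vec (q a))}.
          INF \<nu>\<in>(\<Union>i\<in>- {snd rJ Q}. \<xi> i). ereal (go_cost (fst rJ) B Q \<nu>))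
      \<le> ereal c * (SUP rJ\<in>{(r, J). \<forall>xs. prob_vec (r xs)}.
        INF Q\<in>{Q. length Q = B0 \<and> (\<forall>q\<in>set Q. \<forall>a. prob_vec (q a))}.
          INF \<nu>\<in>(\<Union>i\<in>- {snd rJ Q}. \<xi> i). ereal (go_cost (fst rJ) B0 Q \<nu>))"
    unfolding rJ by simp
qed

lemma go_le_go1:
  fixes \<xi> :: "'k::finite \<Rightarrow> ('k \<Rightarrow> 'x::finite \<Rightarrow> real) set"
  assumes bandits: "\<And>i \<nu>. \<nu> \<in> \<xi> i \<Longrightarrow> bandit \<nu>" and B: "B \<ge> 1"
  shows "R_go \<xi> B \<le> R_go \<xi> 1"
proof -
  have "R_go \<xi> B \<le> ereal 1 * R_go \<xi> 1"
    by (rule block_R[where blk="\<lambda>_. 0" and c=1, OF bandits B]) auto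
  then show ?thesis by simp
qed

lemma count_blk:
  fixes B B0 j :: nat
  assumes B0: "B0 \<ge> 1"
  shows "card {l\<in>{..<B}. l * B0 div B = j} * B0 \<le> B + B0"
proof (cases "{l\<in>{..<B}. l * B0 div B = j} = {}")
  case True
  show ?thesis by (simp only: True card.empty mult_0 le0)
next
  case False
  define S where "S = {l\<in>{..<B}. l * B0 div B = j}"
  have finS: "finite S" unfolding S_def by auto
  define a where "a = Min S"
  have aS: "a \<in> S" unfolding a_def using False finS S_def by (intro Min_in) auto
  have sub: "S \<subseteq> {a..<a + (B div B0 + 1)}"
  proof
    fix l assume lS: "l \<in> S"
    have al: "a \<le> l" unfolding a_def using finS lS by simp
    have Bpos: "B > 0" using lS unfolding S_def by auto
    have ja: "j = a * B0 div B" and jl: "j = l * B0 div B" using aS lS unfolding S_def by auto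
    have "j * B \<le> a * B0" unfolding ja by (rule div_times_less_eq_dividend)
    moreover have "l * B0 < (j + 1) * B"
    proof -
      have "l * B0 = j * B + l * B0 mod B" unfolding jl by simp
      moreover have "l * B0 mod B < B" using Bpos by simp
      ultimately show ?thesis by simp
    qed
    moreover have "(j + 1) * B = j * B + B" by simp
    ultimately have "l * B0 - a * B0 < B" using Bpos by linarith
    then have "(l - a) * B0 < B" by (simp add: diff_mult_distrib)
    moreover have "B < (B div B0 + 1) * B0" using B0
      by (metis add.commute div_mult_mod_eq mod_less_divisor add_less_cancel_left distrib_right mult_1 zero_less_one less_le_trans)
    ultimately have "(l - a) * B0 < (B div B0 + 1) * B0" by linarith
    then have "l - a < B div B0 + 1" using mult_less_cancel2 by blast
    then show "l \<in> {a..<a + (B div B0 + 1)}" using al by auto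
  qed
  have "card S \<le> B div B0 + 1" using card_mono[OF _ sub] by simp
  then have "card S * B0 \<le> (B div B0 + 1) * B0" by (rule mult_le_mono1)
  also have "\<dots> \<le> B + B0" by (simp add: add_mult_distrib)
  finally show ?thesis unfolding S_def .
qed

lemma go_bound:
  fixes \<xi> :: "'k::finite \<Rightarrow> ('k \<Rightarrow> 'x::finite \<Rightarrow> real) set"
  assumes bandits: "\<And>i \<nu>. \<nu> \<in> \<xi> i \<Longrightarrow> bandit \<nu>" and B: "B \<ge> 1" and B0: "B0 \<ge> 1"
  shows "R_go \<xi> B \<le> ereal ((real B + real B0) / real B) * R_go \<xi> B0"
proof (rule block_R[where blk="\<lambda>l. l * B0 div B", OF bandits B B0])
  show "l' * B0 div B \<le> l * B0 div B" if "l' \<le> l" for l l'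
    using that by (intro div_le_mono mult_le_mono1)
  show "l * B0 div B < B0" if "l < B" for l
    using that B0 by (intro less_mult_imp_div_less) simp
  show "real (card {l \<in> {..<B}. l * B0 div B = j}) * real B0 \<le> (real B + real B0) / real B * real B" for j
  proof -
    have "card {l \<in> {..<B}. l * B0 div B = j} * B0 \<le> B + B0" by (rule count_blk[OF B0])
    then have "real (card {l \<in> {..<B}. l * B0 div B = j}) * real B0 \<le> real B + real B0"
      by (metis of_nat_add of_nat_le_iff of_nat_mult)
    then show ?thesis using B by simp
  qed
  show "0 < (real B + real B0) / real B" using B by simp
qed

lemma go_tendsto:
  fixes \<xi> :: "'k::finite \<Rightarrow> ('k \<Rightarrow> 'x::finite \<Rightarrow> real) set"
  assumes bandits: "\<And>i \<nu>. \<nu> \<in> \<xi> i \<Longrightarrow> bandit \<nu>"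
  shows "(\<lambda>B. R_go \<xi> B) \<longlonglongrightarrow> (INF B\<in>{1..}. R_go \<xi> B)"
proof (rule order_tendstoI)
  fix a assume a: "a < (INF B\<in>{1..}. R_go \<xi> B)"
  show "\<forall>\<^sub>F B in sequentially. a < R_go \<xi> B"
    using eventually_ge_at_top[of 1]
  proof (rule eventually_mono)
    fix B :: nat assume "1 \<le> B"
    then have "(INF B\<in>{1..}. R_go \<xi> B) \<le> R_go \<xi> B" by (intro INF_lower) auto
    then show "a < R_go \<xi> B" using a by simp
  qed
next
  fix a assume a: "(INF B\<in>{1..}. R_go \<xi> B) < a"
  then obtain B0 where B0: "B0 \<ge> 1" and lt: "R_go \<xi> B0 < a" by (auto simp: INF_less_iff)
  have bnd: "\<forall>\<^sub>F B in sequentially. R_go \<xi> B \<le> ereal ((real B + real B0) / real B) * R_go \<xi> B0"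
    using eventually_ge_at_top[of 1] by (rule eventually_mono) (rule go_bound[OF bandits _ B0])
  show "\<forall>\<^sub>F B in sequentially. R_go \<xi> B < a"
  proof (cases "R_go \<xi> B0")
    case (real x)
    have lim: "(\<lambda>B. ereal ((1 + real B0 / real B) * x)) \<longlonglongrightarrow> ereal ((1 + 0) * x)"
      by (intro tendsto_intros lim_const_over_n)
    have "\<forall>\<^sub>F B in sequentially. ereal ((1 + real B0 / real B) * x) < a"
      by (rule order_tendstoD(2)[OF lim]) (use lt real in simp)
    then show ?thesis using bnd eventually_ge_at_top[of 1]
    proof (eventually_elim)
      case (elim B)
      have "(real B + real B0) / real B = 1 + real B0 / real B" using elim(3) by (simp add: field_simps)
      then show ?case using elim real by simp
    qed
  next
    case PInf
    then show ?thesis using lt by simp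
  next
    case MInf
    have am: "- \<infinity> < a" using a by (cases a) auto
    show ?thesis using bnd eventually_ge_at_top[of 1]
    proof (eventually_elim)
      case (elim B)
      have "0 < (real B + real B0) / real B" using elim(2) by simp
      then have eqm: "ereal ((real B + real B0) / real B) * R_go \<xi> B0 = - \<infinity>" using MInf elim(2) by simp
      have "R_go \<xi> B \<le> - \<infinity>" using elim(1) unfolding eqm .
      then have "R_go \<xi> B = - \<infinity>" by simp
      then show ?case using am by simp
    qed
  qed
qed

theorem mainTheorem2:
  fixes \<xi> :: "'k::finite \<Rightarrow> ('k \<Rightarrow> 'x::finite \<Rightarrow> real) set"
    and B :: nat
  assumes bandits: "\<And>i \<nu>. \<nu> \<in> \<xi> i \<Longrightarrow> bandit \<nu>"
    and nonempty: "\<And>i. \<xi> i \<noteq> {}"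
    and cpt: "\<And>i. compact (\<xi> i)"
    and disj: "\<And>i j. i \<noteq> j \<Longrightarrow> \<xi> i \<inter> \<xi> j = {}"
    and B: "B \<ge> 1"
  shows "R_static \<xi> \<le> R_go_inf \<xi> \<and> R_go_inf \<xi> \<le> R_go \<xi> B
       \<and> R_go \<xi> B \<le> R_go \<xi> 1 \<and> R_go \<xi> 1 \<le> R_ub \<xi>"
proof -
  have lim: "R_go_inf \<xi> = (INF B\<in>{1..}. R_go \<xi> B)"
    unfolding R_go_inf_def by (rule limI[OF go_tendsto[OF bandits]])
  have 1: "R_static \<xi> \<le> R_go_inf \<xi>"
    unfolding lim by (rule INF_greatest) (rule static_le_go[OF bandits], auto)
  have 2: "R_go_inf \<xi> \<le> R_go \<xi> B"
    unfolding lim using B by (intro INF_lower) auto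
  have 3: "R_go \<xi> B \<le> R_go \<xi> 1" by (rule go_le_go1[OF bandits B])
  have 4: "R_go \<xi> 1 \<le> R_ub \<xi>" by (rule go1_le_ub[OF bandits])
  show ?thesis using 1 2 3 4 by blast
qed

end
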